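(* Let $(X,\mu)$ be a finite non-atomic measure space, $\mathcal H$ a separable Hilbert space, and $\{\phi_t\}_{t\in X}$ a continuous Bessel family in $\mathcal H$. Then for every measurable function $\tau:X\to[0,1]$ and every $\varepsilon>0$ there exists a measurable set $E\subset X$ such that $$\|S_{\phi,E}-S_{\sqrt{\tau}\phi,X}\|\le\varepsilon\qquad\text{and}\qquad\mu(E)\le\int_X\tau\,d\mu.$$
   Context: A family $\{\phi_t\}_{t\in X}$ of vectors in $\mathcal H$ is a continuous Bessel family (with bound $B$) over the measure space $(X,\mu)$ if (i) for each $f\in\mathcal H$ the function $t\mapsto\langle f,\phi_t\rangle$ is measurable, and (ii) there is $B<\infty$ with $\int_X|\langle f,\phi_t\rangle|^2\,d\mu(t)\le B\|f\|^2$ for all $f\in\mathcal H$. For measurable $E\subset X$, the partial frame operator is $S_{\phi,E}f=\int_E\langle f,\phi_t\rangle\phi_t\,d\mu(t)$, and for measurable $\tau:X\to[0,1]$ the weighted frame operator is $S_{\sqrt{\tau}\phi,X}f=\int_X\tau(t)\langle f,\phi_t\rangle\phi_t\,d\mu(t)$ (integrals defined weakly), $f\in\mathcal H$. *)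

theory Defs
  imports "HOL-Analysis.Analysis"
begin

class scaleC = scaleR +
  fixes scaleC :: "complex \<Rightarrow> 'a \<Rightarrow> 'a" (infixr \<open>*\<^sub>C\<close> 75)
  assumes scaleR_scaleC: "scaleR r = scaleC (complex_of_real r)"

class complex_vector = scaleC + ab_group_add +
  assumes scaleC_add_right: "a *\<^sub>C (x + y) = a *\<^sub>C x + a *\<^sub>C y"
    and scaleC_add_left: "(a + b) *\<^sub>C x = a *\<^sub>C x + b *\<^sub>C x"
    and scaleC_scaleC: "a *\<^sub>C b *\<^sub>C x = (a * b) *\<^sub>C x"
    and scaleC_one: "1 *\<^sub>C x = x"

subclass (in complex_vector) real_vector
  by standard (simp_all add: scaleR_scaleC scaleC_add_right scaleC_add_left scaleC_scaleC scaleC_one)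

class complex_normed_vector = complex_vector + real_normed_vector +
  assumes norm_scaleC: "norm (a *\<^sub>C x) = cmod a * norm x"

class complex_inner = complex_normed_vector +
  fixes cinner :: "'a \<Rightarrow> 'a \<Rightarrow> complex"
  assumes cinner_commute: "cinner x y = cnj (cinner y x)"
    and cinner_add_left: "cinner (x + y) z = cinner x z + cinner y z"
    and cinner_scaleC_left: "cinner (a *\<^sub>C x) y = a * cinner x y"
    and cinner_self: "cinner x x = complex_of_real ((norm x)\<^sup>2)"

definition nonatomic :: "'b measure \<Rightarrow> bool" where
  "nonatomic M \<longleftrightarrow> (\<forall>A\<in>sets M. 0 < emeasure M A \<longrightarrow>
      (\<exists>B\<in>sets M. B \<subseteq> A \<and> 0 < emeasure M B \<and> emeasure M B < emeasure M A))"

definition continuous_bessel :: "'b measure \<Rightarrow> ('b \<Rightarrow> 'a::complex_inner) \<Rightarrow> real \<Rightarrow> bool" where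
  "continuous_bessel M \<phi> B \<longleftrightarrow>
     (\<forall>f. (\<lambda>t. cinner f (\<phi> t)) \<in> borel_measurable M) \<and>
     (\<forall>f. (\<integral>\<^sup>+ t. ennreal ((cmod (cinner f (\<phi> t)))\<^sup>2) \<partial>M) \<le> ennreal (B * (norm f)\<^sup>2))"

definition continuous_bessel_family :: "'b measure \<Rightarrow> ('b \<Rightarrow> 'a::complex_inner) \<Rightarrow> bool" where
  "continuous_bessel_family M \<phi> \<longleftrightarrow> (\<exists>B. continuous_bessel M \<phi> B)"

text \<open>Weighted frame operator S_{sqrt tau phi, X}, defined weakly:
  the vector g with <g,h> = integral of tau t <f,phi_t> <phi_t,h> for all h.\<close>
definition weighted_frame_op ::
  "'b measure \<Rightarrow> ('b \<Rightarrow> 'a::complex_inner) \<Rightarrow> ('b \<Rightarrow> real) \<Rightarrow> 'a \<Rightarrow> 'a" where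
  "weighted_frame_op M \<phi> \<tau> f =
     (THE g. \<forall>h. cinner g h =
        (\<integral> t. complex_of_real (\<tau> t) * cinner f (\<phi> t) * cinner (\<phi> t) h \<partial>M))"

definition partial_frame_op ::
  "'b measure \<Rightarrow> ('b \<Rightarrow> 'a::complex_inner) \<Rightarrow> 'b set \<Rightarrow> 'a \<Rightarrow> 'a" where
  "partial_frame_op M \<phi> E f =
     (THE g. \<forall>h. cinner g h =
        (\<integral> t\<in>E. cinner f (\<phi> t) * cinner (\<phi> t) h \<partial>M))"

end

theory Submission
  imports Defs
begin

lemma scaleC_zero_left[simp]: fixes x y :: "'a::complex_vector" shows "0 *\<^sub>C x = 0"
proof -
  have "0 *\<^sub>C x + 0 *\<^sub>C x = 0 *\<^sub>C x" by (simp add: scaleC_add_left[symmetric])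
  thus ?thesis by simp
qed
lemma scaleC_zero_right[simp]: fixes x y :: "'a::complex_vector" shows "a *\<^sub>C (0::'a) = 0"
proof -
  have "a *\<^sub>C (0::'a) + a *\<^sub>C 0 = a *\<^sub>C 0" by (simp add: scaleC_add_right[symmetric])
  thus ?thesis by simp
qed
lemma scaleC_minus_left: fixes x y :: "'a::complex_vector" shows "(- a) *\<^sub>C x = - (a *\<^sub>C x)"
proof -
  have "(- a) *\<^sub>C x + a *\<^sub>C x = 0" by (simp add: scaleC_add_left[symmetric])
  thus ?thesis by (simp add: eq_neg_iff_add_eq_0)
qed
lemma scaleC_minus_right: fixes x y :: "'a::complex_vector" shows "a *\<^sub>C (- x) = - (a *\<^sub>C x)"
proof -
  have "a *\<^sub>C (- x) + a *\<^sub>C x = 0" by (simp add: scaleC_add_right[symmetric])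
  thus ?thesis by (simp add: eq_neg_iff_add_eq_0)
qed
lemma scaleC_diff_right: fixes x y :: "'a::complex_vector" shows "a *\<^sub>C (x - y) = a *\<^sub>C x - a *\<^sub>C y"
  using scaleC_add_right[of a x "- y"] scaleC_minus_right[of a y] by simp
lemma scaleC_diff_left: fixes x y :: "'a::complex_vector" shows "(a - b) *\<^sub>C x = a *\<^sub>C x - b *\<^sub>C x"
  using scaleC_add_left[of a "- b" x] scaleC_minus_left[of b x] by simp

lemma cinner_zero_left[simp]: fixes x y z :: "'a::complex_inner" shows "cinner 0 y = 0"
proof -
  have "cinner 0 y + cinner 0 y = cinner 0 y" by (simp add: cinner_add_left[symmetric])
  thus ?thesis by simp
qed
lemma cinner_zero_right[simp]: fixes x y z :: "'a::complex_inner" shows "cinner x 0 = 0"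
  by (subst cinner_commute) simp
lemma cinner_add_right: fixes x y z :: "'a::complex_inner" shows "cinner x (y + z) = cinner x y + cinner x z"
  by (subst (1 2 3) cinner_commute) (simp add: cinner_add_left)
lemma cinner_scaleC_right: fixes x y z :: "'a::complex_inner" shows "cinner x (a *\<^sub>C y) = cnj a * cinner x y"
  by (subst (1 2) cinner_commute) (simp add: cinner_scaleC_left)
lemma cinner_minus_left: fixes x y z :: "'a::complex_inner" shows "cinner (- x) y = - cinner x y"
proof -
  have "cinner (- x) y + cinner x y = 0" by (simp add: cinner_add_left[symmetric])
  thus ?thesis by (rule add_eq_0_iff2[THEN iffD1])
qed
lemma cinner_minus_right: fixes x y z :: "'a::complex_inner" shows "cinner x (- y) = - cinner x y"
  by (subst (1 2) cinner_commute) (simp add: cinner_minus_left)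
lemma cinner_diff_left: fixes x y z :: "'a::complex_inner" shows "cinner (x - y) z = cinner x z - cinner y z"
  using cinner_add_left[of x "- y" z] cinner_minus_left[of y z] by simp
lemma cinner_diff_right: fixes x y z :: "'a::complex_inner" shows "cinner x (y - z) = cinner x y - cinner x z"
  using cinner_add_right[of x y "- z"] cinner_minus_right[of x z] by simp
lemma cinner_scaleR_left: fixes x y z :: "'a::complex_inner" shows "cinner (r *\<^sub>R x) y = of_real r * cinner x y"
  by (simp add: scaleR_scaleC cinner_scaleC_left)
lemma cinner_scaleR_right: fixes x y z :: "'a::complex_inner" shows "cinner x (r *\<^sub>R y) = of_real r * cinner x y"
  by (simp add: scaleR_scaleC cinner_scaleC_right)
lemma cinner_self_eq_zero[simp]: fixes x y z :: "'a::complex_inner" shows "cinner x x = 0 \<longleftrightarrow> x = 0"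
  by (simp add: cinner_self)

lemma norm_cinner: fixes x y z :: "'a::complex_inner" shows "complex_of_real ((norm x)\<^sup>2) = cinner x x" by (simp add: cinner_self)

lemma cmod_cinner_le: fixes x y :: "'a::complex_inner" shows "cmod (cinner x y) \<le> norm x * norm y"
proof (cases "y = 0")
  case True thus ?thesis by simp
next
  case False
  define l where "l = cinner x y / complex_of_real ((norm y)\<^sup>2)"
  have ny: "norm y > 0" using False by simp
  have e1: "cinner (x - l *\<^sub>C y) (x - l *\<^sub>C y) =
        cinner x x - cnj l * cinner x y - l * cinner y x + l * cnj l * cinner y y"
    by (simp add: cinner_diff_left cinner_diff_right cinner_scaleC_left cinner_scaleC_right algebra_simps)
  have cyx: "cinner y x = cnj (cinner x y)" by (rule cinner_commute)
  have zz: "cinner x y * cnj (cinner x y) = (complex_of_real (cmod (cinner x y)))\<^sup>2"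
      by (metis complex_norm_square of_real_power)
  have "l * cinner y x = (cmod (cinner x y))\<^sup>2 / (norm y)\<^sup>2"
    unfolding l_def cyx using zz by simp
  moreover have "cnj l * cinner x y = (cmod (cinner x y))\<^sup>2 / (norm y)\<^sup>2"
    unfolding l_def using zz by (simp add: mult.commute)
  moreover have "l * cnj l * cinner y y = (cmod (cinner x y))\<^sup>2 / (norm y)\<^sup>2"
    unfolding l_def using ny zz by (simp add: cinner_self power2_eq_square)
  ultimately have "cinner (x - l *\<^sub>C y) (x - l *\<^sub>C y) = complex_of_real ((norm x)\<^sup>2 - (cmod (cinner x y))\<^sup>2 / (norm y)\<^sup>2)"
    using e1 by (simp add: cinner_self)
  hence "complex_of_real ((norm (x - l *\<^sub>C y))\<^sup>2) = complex_of_real ((norm x)\<^sup>2 - (cmod (cinner x y))\<^sup>2 / (norm y)\<^sup>2)"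
    by (simp only: cinner_self)
  hence "(norm (x - l *\<^sub>C y))\<^sup>2 = (norm x)\<^sup>2 - (cmod (cinner x y))\<^sup>2 / (norm y)\<^sup>2"
    by (simp only: of_real_eq_iff)
  hence "(cmod (cinner x y))\<^sup>2 / (norm y)\<^sup>2 \<le> (norm x)\<^sup>2" by (metis diff_ge_0_iff_ge zero_le_power2)
  hence "(cmod (cinner x y))\<^sup>2 \<le> (norm x * norm y)\<^sup>2" using ny by (simp add: field_simps power_mult_distrib)
  thus ?thesis by (meson abs_le_square_iff abs_of_nonneg mult_nonneg_nonneg norm_ge_zero power2_le_imp_le)
qed


lemma norm_add_sq: fixes a b :: "'a::complex_inner"
  shows "(norm (a + b))\<^sup>2 = (norm a)\<^sup>2 + (norm b)\<^sup>2 + 2 * Re (cinner a b)"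
proof -
  have "complex_of_real ((norm (a + b))\<^sup>2) = cinner (a + b) (a + b)" by (rule cinner_self[symmetric])
  also have "\<dots> = cinner a a + cinner b b + (cinner a b + cnj (cinner a b))"
    by (simp add: cinner_add_left cinner_add_right cinner_commute[of b a])
  also have "\<dots> = complex_of_real ((norm a)\<^sup>2 + (norm b)\<^sup>2 + 2 * Re (cinner a b))"
    by (simp add: cinner_self complex_add_cnj)
  finally show ?thesis by (simp only: of_real_eq_iff)
qed

lemma norm_diff_sq: fixes a b :: "'a::complex_inner"
  shows "(norm (a - b))\<^sup>2 = (norm a)\<^sup>2 + (norm b)\<^sup>2 - 2 * Re (cinner a b)"
  using norm_add_sq[of a "- b"] by (simp add: cinner_minus_right)

lemma riesz_linear:
  fixes l :: "'a::{complex_inner, complete_space} \<Rightarrow> complex"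
  assumes add: "\<And>x y. l (x + y) = l x + l y"
    and sc: "\<And>a x. l (a *\<^sub>C x) = a * l x"
    and bd: "\<And>x. cmod (l x) \<le> K * norm x"
  shows "\<exists>g. \<forall>h. l h = cinner h g"
proof (cases "\<forall>x. l x = 0")
  case True thus ?thesis by (intro exI[of _ 0]) simp
next
  case False
  have l0: "l 0 = 0" using add[of 0 0] by simp
  have lminus: "l (- x) = - l x" for x using add[of x "- x"] l0 by (simp add: eq_neg_iff_add_eq_0 add.commute)
  have ldiff: "l (x - y) = l x - l y" for x y using add[of x "- y"] lminus[of y] by simp
  have lR: "l (r *\<^sub>R x) = of_real r * l x" for r x by (simp add: scaleR_scaleC sc)
  from False obtain u where u: "l u \<noteq> 0" by auto
  define u1 where "u1 = (1 / l u) *\<^sub>C u"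
  have u1: "l u1 = 1" using u unfolding u1_def by (simp add: sc)
  define S where "S = {(norm x)\<^sup>2 | x. l x = 1}"
  define d where "d = Inf S"
  have Sne: "S \<noteq> {}" using u1 unfolding S_def by auto
  have Sbd: "bdd_below S" unfolding S_def by (rule bdd_belowI[of _ 0]) auto
  have dle: "d \<le> (norm x)\<^sup>2" if "l x = 1" for x
    unfolding d_def by (rule cInf_lower[OF _ Sbd]) (use that S_def in auto)
  have "\<forall>n. \<exists>x. l x = 1 \<and> (norm x)\<^sup>2 < d + 1 / (real n + 1)"
  proof
    fix n
    have "Inf S < d + 1 / (real n + 1)" unfolding d_def by (simp add: add_pos_pos)
    then obtain s where "s \<in> S" "s < d + 1 / (real n + 1)"
      using cInf_lessD[OF Sne] by blast
    thus "\<exists>x. l x = 1 \<and> (norm x)\<^sup>2 < d + 1 / (real n + 1)" unfolding S_def by auto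
  qed
  then obtain x where x1: "\<And>n. l (x n) = 1" and xs: "\<And>n. (norm (x n))\<^sup>2 < d + 1 / (real n + 1)"
    by metis
  have dist_sq: "(norm (x n - x m))\<^sup>2 \<le> 2 / (real n + 1) + 2 / (real m + 1)" for n m
  proof -
    have par: "(norm (x n - x m))\<^sup>2 + (norm (x n + x m))\<^sup>2 = 2 * (norm (x n))\<^sup>2 + 2 * (norm (x m))\<^sup>2"
      using norm_add_sq[of "x n" "x m"] norm_diff_sq[of "x n" "x m"] by simp
    have "l ((1/2) *\<^sub>R (x n + x m)) = 1" using x1 by (simp add: lR add)
    hence "d \<le> (norm ((1/2) *\<^sub>R (x n + x m)))\<^sup>2" by (rule dle)
    hence "4 * d \<le> (norm (x n + x m))\<^sup>2" by (simp add: power2_eq_square)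
    thus ?thesis using par xs[of n] xs[of m] by linarith
  qed
  have "Cauchy x"
  proof (rule CauchyI)
    fix e :: real assume e: "0 < e"
    obtain M :: nat where M: "4 / e\<^sup>2 < real M" using reals_Archimedean2 by blast
    show "\<exists>M. \<forall>m\<ge>M. \<forall>n\<ge>M. norm (x m - x n) < e"
    proof (intro exI allI impI)
      fix m n assume mn: "M \<le> m" "M \<le> n"
      have "2 / (real m + 1) \<le> 2 / (real M + 1)" "2 / (real n + 1) \<le> 2 / (real M + 1)"
        using mn by (simp_all add: frac_le)
      hence "(norm (x m - x n))\<^sup>2 \<le> 4 / (real M + 1)" using dist_sq[of m n] by simp
      also have "\<dots> < e\<^sup>2"
      proof -
        have "4 < real M * e\<^sup>2" using M e by (simp add: field_simps)
        moreover have "0 < e\<^sup>2" using e by simp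
        ultimately have "4 < e\<^sup>2 + real M * e\<^sup>2" by linarith
        hence "4 < (real M + 1) * e\<^sup>2" by (simp add: distrib_right)
        hence "4 < e\<^sup>2 * (real M + 1)" by (metis mult.commute)
        moreover have "0 < real M + 1" by simp
        ultimately show ?thesis by (simp add: pos_divide_less_eq)
      qed
      finally have sq: "(norm (x m - x n))\<^sup>2 < e\<^sup>2" .
      show "norm (x m - x n) < e" using power_less_imp_less_base[OF sq] e by simp
    qed
  qed
  then obtain z where xz: "x \<longlonglongrightarrow> z" using Cauchy_convergent convergent_def by blast
  have lz: "l z = 1"
  proof -
    have a: "(\<lambda>n. x n - z) \<longlonglongrightarrow> 0" using LIM_zero[OF xz] .
    have b: "(\<lambda>n. norm (x n - z)) \<longlonglongrightarrow> 0" using tendsto_norm_zero[OF a] .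
    have c: "(\<lambda>n. K * norm (x n - z)) \<longlonglongrightarrow> 0" using tendsto_mult_right_zero[OF b] .
    have ev: "\<forall>\<^sub>F n in sequentially. norm (l (x n - z)) \<le> K * norm (x n - z)"
      using bd by (intro always_eventually allI) simp
    have d: "(\<lambda>n. l (x n - z)) \<longlonglongrightarrow> 0" by (rule Lim_null_comparison[OF ev c])
    have "\<And>n. l (x n - z) = 1 - l z" using x1 ldiff by simp
    hence "(\<lambda>n. 1 - l z) \<longlonglongrightarrow> 0" using d by simp
    hence "1 - l z = 0" by (simp only: LIMSEQ_const_iff)
    thus ?thesis by simp
  qed
  have zmin: "(norm z)\<^sup>2 \<le> d"
  proof (rule LIMSEQ_le)
    show "(\<lambda>n. (norm (x n))\<^sup>2) \<longlonglongrightarrow> (norm z)\<^sup>2" by (intro tendsto_intros xz)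
    show "(\<lambda>n. d + 1 / (real n + 1)) \<longlonglongrightarrow> d"
      using LIMSEQ_inverse_real_of_nat_add[of d] by (simp add: inverse_eq_divide add.commute)
    show "\<exists>N. \<forall>n\<ge>N. (norm (x n))\<^sup>2 \<le> d + 1 / (real n + 1)" using xs less_imp_le by blast
  qed
  have z0: "z \<noteq> 0" using lz l0 by auto
  have orth: "cinner w z = 0" if w: "l w = 0" for w
  proof -
    define c where "c = cinner z w"
    define t where "t = 1 / ((norm w)\<^sup>2 + 1)"
    have tpos: "t > 0" unfolding t_def by (simp add: add_nonneg_pos)
    have tw: "t * (norm w)\<^sup>2 < 1"
    proof -
      have p: "0 < (norm w)\<^sup>2 + 1" by (simp add: add_nonneg_pos)
      have "t * (norm w)\<^sup>2 = (norm w)\<^sup>2 / ((norm w)\<^sup>2 + 1)" unfolding t_def by simp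
      also have "\<dots> < 1" using p by (simp add: divide_less_eq)
      finally show ?thesis .
    qed
    have "l (z + (- (of_real t * c)) *\<^sub>C w) = 1" using lz w by (simp add: add sc)
    hence "(norm z)\<^sup>2 \<le> (norm (z + (- (of_real t * c)) *\<^sub>C w))\<^sup>2" using dle zmin order_trans by blast
    also have "\<dots> = (norm z)\<^sup>2 + (t * cmod c)\<^sup>2 * (norm w)\<^sup>2 - 2 * t * (cmod c)\<^sup>2"
    proof -
      have cc: "cnj c * c = complex_of_real ((cmod c)\<^sup>2)" by (metis complex_norm_square mult.commute)
      have "cinner z ((- (of_real t * c)) *\<^sub>C w) = - of_real t * (cnj c * c)"
        by (simp add: cinner_scaleC_right c_def[symmetric])
      also have "\<dots> = complex_of_real (- t * (cmod c)\<^sup>2)" by (simp add: cc)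
      finally have "Re (cinner z ((- (of_real t * c)) *\<^sub>C w)) = - t * (cmod c)\<^sup>2" by simp
      thus ?thesis using norm_add_sq[of z "(- (of_real t * c)) *\<^sub>C w"]
        by (simp add: norm_scaleC norm_mult power_mult_distrib)
    qed
    finally have "0 \<le> t * (cmod c)\<^sup>2 * (t * (norm w)\<^sup>2 - 2)" by (simp add: power2_eq_square algebra_simps)
    hence P: "0 \<le> t * (cmod c)\<^sup>2 * (t * (norm w)\<^sup>2 - 2)" .
    have "c = 0"
    proof (rule ccontr)
      assume "c \<noteq> 0"
      hence "0 < t * (cmod c)\<^sup>2" using tpos by simp
      moreover have "0 < 2 - t * (norm w)\<^sup>2" using tw by simp
      ultimately have "0 < t * (cmod c)\<^sup>2 * (2 - t * (norm w)\<^sup>2)" by (rule mult_pos_pos)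
      thus False using P by (simp add: algebra_simps)
    qed
    thus ?thesis unfolding c_def by (subst cinner_commute) simp
  qed
  show ?thesis
  proof (intro exI allI)
    fix h
    have "l (h - l h *\<^sub>C z) = 0" using lz by (simp add: ldiff sc)
    hence "cinner (h - l h *\<^sub>C z) z = 0" by (rule orth)
    hence hz: "cinner h z = l h * complex_of_real ((norm z)\<^sup>2)"
      by (simp add: cinner_diff_left cinner_scaleC_left cinner_self)
    show "l h = cinner h ((1 / (norm z)\<^sup>2) *\<^sub>R z)"
      using z0 by (simp add: cinner_scaleR_right hz)
  qed
qed

lemma riesz_conj:
  fixes L :: "'a::{complex_inner, complete_space} \<Rightarrow> complex"
  assumes add: "\<And>x y. L (x + y) = L x + L y"
    and sc: "\<And>a x. L (a *\<^sub>C x) = cnj a * L x"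
    and bd: "\<And>x. cmod (L x) \<le> K * norm x"
  shows "\<exists>g. \<forall>h. cinner g h = L h"
proof -
  obtain g where "\<forall>h. cnj (L h) = cinner h g"
    using riesz_linear[of "\<lambda>h. cnj (L h)" K] add sc bd by auto
  thus ?thesis by (metis cinner_commute complex_cnj_cnj)
qed

lemma cinner_ext: fixes g g' :: "'a::complex_inner"
  assumes "\<And>h. cinner g h = cinner g' h" shows "g = g'"
proof -
  have "cinner (g - g') (g - g') = 0" using assms by (simp add: cinner_diff_left)
  thus ?thesis by simp
qed

lemma (in finite_measure) nonatomic_split:
  assumes na: "nonatomic M" and A: "A \<in> sets M" "measure M A > 0"
  shows "\<exists>B\<in>sets M. B \<subseteq> A \<and> 0 < measure M B \<and> measure M B < measure M A"
proof -
  have "0 < emeasure M A" using A by (simp add: emeasure_eq_measure)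
  then obtain B where B: "B \<in> sets M" "B \<subseteq> A" "0 < emeasure M B" "emeasure M B < emeasure M A"
    using na A unfolding nonatomic_def by blast
  thus ?thesis by (intro bexI[of _ B]) (auto simp: emeasure_eq_measure ennreal_less_iff)
qed

lemma (in finite_measure) nonatomic_small:
  assumes na: "nonatomic M" and A: "A \<in> sets M" "measure M A > 0" and d: "d > 0"
  shows "\<exists>B\<in>sets M. B \<subseteq> A \<and> 0 < measure M B \<and> measure M B \<le> d"
proof -
  have half: "\<exists>B\<in>sets M. B \<subseteq> A \<and> 0 < measure M B \<and> measure M B \<le> measure M A / 2 ^ n" for n
  proof (induction n)
    case 0 thus ?case using A by auto
  next
    case (Suc n)
    then obtain B where B: "B \<in> sets M" "B \<subseteq> A" "0 < measure M B" "measure M B \<le> measure M A / 2 ^ n" by blast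
    then obtain C where C: "C \<in> sets M" "C \<subseteq> B" "0 < measure M C" "measure M C < measure M B"
      using nonatomic_split[OF na B(1,3)] by blast
    have BC: "measure M (B - C) = measure M B - measure M C" using finite_measure_Diff[OF B(1) C(1,2)] .
    have p2: "(0::real) < 2 ^ n" by simp
    show ?case
    proof (cases "measure M C \<le> measure M B / 2")
      case True
      have "measure M B / 2 \<le> measure M A / 2 ^ n / 2" using B(4) by (rule divide_right_mono) simp
      hence "measure M C \<le> measure M A / 2 ^ n / 2" using True by (rule order_trans[rotated])
      thus ?thesis using C B by (intro bexI[of _ C]) auto
    next
      case False
      have "measure M B / 2 \<le> measure M A / 2 ^ n / 2" using B(4) by (rule divide_right_mono) simp
      hence "measure M (B - C) \<le> measure M A / 2 ^ n / 2" using False BC by simp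
      moreover have "0 < measure M (B - C)" using BC C by simp
      moreover have "B - C \<in> sets M" using B C by auto
      ultimately show ?thesis using B by (intro bexI[of _ "B - C"]) auto
    qed
  qed
  obtain n :: nat where n: "measure M A / d < real n" using reals_Archimedean2 by blast
  have "real n < 2 ^ n" by (rule of_nat_less_two_power)
  hence "measure M A / d < 2 ^ n" using n by linarith
  hence lt: "measure M A / 2 ^ n < d" using d by (simp add: field_simps)
  obtain B where B: "B \<in> sets M" "B \<subseteq> A" "0 < measure M B" "measure M B \<le> measure M A / 2 ^ n"
    using half[of n] by blast
  show ?thesis using B lt by (intro bexI[of _ B]) auto
qed

lemma (in finite_measure) nonatomic_exact:
  assumes na: "nonatomic M" and A: "A \<in> sets M" and c: "0 \<le> c" "c \<le> measure M A"
  shows "\<exists>B\<in>sets M. B \<subseteq> A \<and> measure M B = c"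
proof -
  define cand where "cand B = {C \<in> sets M. C \<subseteq> A - B \<and> measure M B + measure M C \<le> c}" for B
  define s where "s B = Sup (measure M ` cand B)" for B
  define nxt where "nxt B = B \<union> (SOME C. C \<in> cand B \<and> s B / 2 \<le> measure M C)" for B
  define Bs where "Bs = rec_nat {} (\<lambda>_ B. nxt B)"
  have Bs0: "Bs 0 = {}" and BsS: "Bs (Suc n) = nxt (Bs n)" for n by (simp_all add: Bs_def)
  define good where "good B \<longleftrightarrow> B \<in> sets M \<and> B \<subseteq> A \<and> measure M B \<le> c" for B
  have bdd: "bdd_above (measure M ` cand B)" for B
    by (rule bdd_aboveI[of _ "measure M (space M)"]) (auto intro: bounded_measure)
  have spos: "0 \<le> s B" if "good B" for B
  proof -
    have "{} \<in> cand B" using that unfolding cand_def good_def by auto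
    hence "measure M {} \<in> measure M ` cand B" by (rule imageI)
    hence "measure M {} \<le> s B" unfolding s_def by (intro cSup_upper bdd)
    thus ?thesis by simp
  qed
  have someC: "\<exists>C. C \<in> cand B \<and> s B / 2 \<le> measure M C" if "good B" for B
  proof (cases "s B = 0")
    case True
    have "{} \<in> cand B" using that unfolding cand_def good_def by auto
    thus ?thesis using True by (intro exI[of _ "{}"]) auto
  next
    case False
    hence sp: "0 < s B" using spos[OF that] by simp
    have ne: "measure M ` cand B \<noteq> {}" using that unfolding cand_def good_def by auto
    have "s B / 2 < Sup (measure M ` cand B)" using sp unfolding s_def by simp
    then obtain y where "y \<in> measure M ` cand B" "s B / 2 < y" using less_cSupE[OF _ ne] by blast
    thus ?thesis by auto
  qed
  have nxtC: "nxt B = B \<union> C \<and> C \<in> cand B \<and> s B / 2 \<le> measure M C" if "good B" "C = (SOME C. C \<in> cand B \<and> s B / 2 \<le> measure M C)" for B C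
    using someI_ex[OF someC[OF that(1)]] that(2) unfolding nxt_def by simp
  have nxt_good: "good (nxt B) \<and> B \<subseteq> nxt B
        \<and> measure M B + s B / 2 \<le> measure M (nxt B)" if g: "good B" for B
  proof -
    define C where "C = (SOME C. C \<in> cand B \<and> s B / 2 \<le> measure M C)"
    have h: "nxt B = B \<union> C" "C \<in> cand B" "s B / 2 \<le> measure M C" using nxtC[OF g C_def] by auto
    have Cs: "C \<in> sets M" "C \<subseteq> A - B" "measure M B + measure M C \<le> c" using h(2) unfolding cand_def by auto
    have Bs: "B \<in> sets M" "B \<subseteq> A" using g unfolding good_def by auto
    have un: "measure M (B \<union> C) = measure M B + measure M C"
      using Cs Bs by (intro finite_measure_Union) auto
    have "nxt B - B = C" using h(1) Cs by auto
    thus ?thesis using h Cs Bs un unfolding good_def by auto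
  qed
  have goodBs: "good (Bs n)" for n
  proof (induction n)
    case 0 thus ?case using A c by (simp add: Bs0 good_def)
  next
    case (Suc n) thus ?case using nxt_good[OF Suc.IH] by (simp add: BsS)
  qed
  have incBs: "incseq Bs"
  proof (rule incseq_SucI)
    fix n show "Bs n \<subseteq> Bs (Suc n)" using nxt_good[OF goodBs[of n]] by (simp add: BsS)
  qed
  have sBs: "range Bs \<subseteq> sets M" using goodBs unfolding good_def by auto
  define U where "U = (\<Union>n. Bs n)"
  have lim: "(\<lambda>n. measure M (Bs n)) \<longlonglongrightarrow> measure M U"
    unfolding U_def by (rule finite_Lim_measure_incseq[OF sBs incBs])
  have Ule: "measure M U \<le> c"
    by (rule LIMSEQ_le_const2[OF lim]) (use goodBs good_def in auto)
  have Us: "U \<in> sets M" "U \<subseteq> A" using sBs goodBs unfolding U_def good_def by auto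
  have "measure M U = c"
  proof (rule ccontr)
    assume "measure M U \<noteq> c"
    hence lt: "measure M U < c" using Ule by simp
    have "measure M (A - U) = measure M A - measure M U" using finite_measure_Diff[OF A Us] .
    hence pos: "0 < measure M (A - U)" using lt c by simp
    obtain D where D: "D \<in> sets M" "D \<subseteq> A - U" "0 < measure M D" "measure M D \<le> c - measure M U"
      using nonatomic_small[OF na _ pos, of "c - measure M U"] lt A Us by auto
    have BsU: "measure M (Bs n) \<le> measure M U" for n
      using Us(1) unfolding U_def by (intro finite_measure_mono) auto
    have Dc: "D \<in> cand (Bs n)" for n
      using D BsU[of n] unfolding cand_def U_def by auto
    have sD: "measure M D \<le> s (Bs n)" for n
      unfolding s_def by (rule cSup_upper[OF _ bdd]) (use Dc in auto)
    have grow: "real n * (measure M D / 2) \<le> measure M (Bs n)" for n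
    proof (induction n)
      case 0 thus ?case by simp
    next
      case (Suc n)
      have "measure M (Bs n) + s (Bs n) / 2 \<le> measure M (Bs (Suc n))"
        using nxt_good[OF goodBs[of n]] by (simp add: BsS)
      thus ?case using Suc sD[of n] by (simp add: algebra_simps)
    qed
    obtain n :: nat where n: "2 * c / measure M D < real n" using reals_Archimedean2 by blast
    hence "2 * c < real n * measure M D" using D(3) by (simp add: field_simps)
    hence "c < measure M (Bs n)" using grow[of n] by simp
    thus False using goodBs[of n] unfolding good_def by simp
  qed
  thus ?thesis using Us by blast
qed

lemma amgm_s: fixes a b s :: real assumes "s > 0"
  shows "2 * \<bar>a * b\<bar> \<le> s * a\<^sup>2 + b\<^sup>2 / s"
proof -
  have "0 \<le> (s * \<bar>a\<bar> - \<bar>b\<bar>)\<^sup>2" by simp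
  hence "2 * s * \<bar>a * b\<bar> \<le> s\<^sup>2 * a\<^sup>2 + b\<^sup>2"
    by (simp add: power2_eq_square algebra_simps abs_mult)
  hence "2 * \<bar>a * b\<bar> \<le> (s\<^sup>2 * a\<^sup>2 + b\<^sup>2) / s" using assms
    by (simp add: pos_le_divide_eq algebra_simps)
  also have "(s\<^sup>2 * a\<^sup>2 + b\<^sup>2) / s = s * a\<^sup>2 + b\<^sup>2 / s" using assms
    by (simp add: power2_eq_square add_divide_distrib)
  finally show ?thesis .
qed

lemma real_le_from_all_s:
  fixes X U V :: real
  assumes h: "\<And>s. s > 0 \<Longrightarrow> 2 * X \<le> s * U + V / s" and U: "0 \<le> U" and V: "0 \<le> V"
  shows "X \<le> sqrt U * sqrt V"
proof (cases "U = 0 \<or> V = 0")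
  case True
  have "X \<le> 0"
  proof (rule ccontr)
    assume "\<not> X \<le> 0" hence X: "X > 0" by simp
    show False
    proof (cases "U = 0")
      case True
      define s where "s = (V + 1) / X"
      have s: "s > 0" using X V unfolding s_def by simp
      have "2 * X \<le> V / s" using h[OF s] True by simp
      also have "\<dots> = V * X / (V + 1)" unfolding s_def using X V by (simp add: field_simps)
      also have "\<dots> < X" using X V by (simp add: field_simps)
      finally show False using X by simp
    next
      case False
      hence V0: "V = 0" using \<open>U = 0 \<or> V = 0\<close> by simp
      define s where "s = X / (U + 1)"
      have s: "s > 0" using X U unfolding s_def by simp
      have "2 * X \<le> s * U" using h[OF s] V0 by simp
      also have "\<dots> = X * U / (U + 1)" unfolding s_def using X U by (simp add: field_simps)
      also have "\<dots> < X" using X U by (simp add: field_simps)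
      finally show False using X by simp
    qed
  qed
  thus ?thesis using U V by (meson order_trans mult_nonneg_nonneg real_sqrt_ge_zero)
next
  case False
  hence U': "U > 0" and V': "V > 0" using U V by auto
  define s where "s = sqrt V / sqrt U"
  have s: "s > 0" using U' V' unfolding s_def by simp
  have dU: "U / sqrt U = sqrt U" using U by (rule real_div_sqrt)
  have dV: "V / sqrt V = sqrt V" using V by (rule real_div_sqrt)
  have "s * U = sqrt V * (U / sqrt U)" unfolding s_def by simp
  hence "s * U = sqrt U * sqrt V" using dU by simp
  moreover have "V / s = (V / sqrt V) * sqrt U" unfolding s_def by simp
  hence "V / s = sqrt U * sqrt V" using dV by simp
  ultimately show ?thesis using h[OF s] by simp
qed

lemma cs_integral:
  fixes u v :: "'b \<Rightarrow> real"
  assumes mu[measurable]: "u \<in> borel_measurable M" and mv[measurable]: "v \<in> borel_measurable M"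
    and iu: "integrable M (\<lambda>t. (u t)\<^sup>2)" and iv: "integrable M (\<lambda>t. (v t)\<^sup>2)"
  shows "integrable M (\<lambda>t. u t * v t)"
    and "(\<integral>t. \<bar>u t * v t\<bar> \<partial>M) \<le> sqrt (\<integral>t. (u t)\<^sup>2 \<partial>M) * sqrt (\<integral>t. (v t)\<^sup>2 \<partial>M)"
proof -
  have iuv: "integrable M (\<lambda>t. (u t)\<^sup>2 + (v t)\<^sup>2)" using iu iv by simp
  show int: "integrable M (\<lambda>t. u t * v t)"
  proof (rule Bochner_Integration.integrable_bound[OF iuv])
    show "(\<lambda>t. u t * v t) \<in> borel_measurable M" by measurable
    show "AE t in M. norm (u t * v t) \<le> norm ((u t)\<^sup>2 + (v t)\<^sup>2)"
    proof (intro AE_I2)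
      fix t
      have "2 * \<bar>u t * v t\<bar> \<le> 1 * (u t)\<^sup>2 + (v t)\<^sup>2 / 1" by (rule amgm_s) simp
      thus "norm (u t * v t) \<le> norm ((u t)\<^sup>2 + (v t)\<^sup>2)" by simp
    qed
  qed
  have ia: "integrable M (\<lambda>t. \<bar>u t * v t\<bar>)" using int by simp
  show "(\<integral>t. \<bar>u t * v t\<bar> \<partial>M) \<le> sqrt (\<integral>t. (u t)\<^sup>2 \<partial>M) * sqrt (\<integral>t. (v t)\<^sup>2 \<partial>M)"
  proof (rule real_le_from_all_s)
    fix s :: real assume s: "s > 0"
    have "2 * (\<integral>t. \<bar>u t * v t\<bar> \<partial>M) = (\<integral>t. 2 * \<bar>u t * v t\<bar> \<partial>M)" by simp
    also have "\<dots> \<le> (\<integral>t. s * (u t)\<^sup>2 + (v t)\<^sup>2 / s \<partial>M)"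
      using iu iv ia s by (intro integral_mono amgm_s) auto
    also have "\<dots> = s * (\<integral>t. (u t)\<^sup>2 \<partial>M) + (\<integral>t. (v t)\<^sup>2 \<partial>M) / s"
      using iu iv by simp
    finally show "2 * (\<integral>t. \<bar>u t * v t\<bar> \<partial>M) \<le> s * (\<integral>t. (u t)\<^sup>2 \<partial>M) + (\<integral>t. (v t)\<^sup>2 \<partial>M) / s" .
  qed (auto intro!: integral_nonneg_AE)
qed

locale bsetup = finite_measure M for M :: "'b measure" +
  fixes \<phi> :: "'b \<Rightarrow> 'a::{complex_inner, complete_space}" and B :: real
  assumes meas[measurable]: "\<And>f. (\<lambda>t. cinner f (\<phi> t)) \<in> borel_measurable M"
    and B0: "0 \<le> B"
    and sqint: "\<And>f. integrable M (\<lambda>t. (cmod (cinner f (\<phi> t)))\<^sup>2)"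
    and sqbd: "\<And>f. (\<integral>t. (cmod (cinner f (\<phi> t)))\<^sup>2 \<partial>M) \<le> B * (norm f)\<^sup>2"
begin

lemma meas'[measurable]: "(\<lambda>t. cinner (\<phi> t) h) \<in> borel_measurable M"
proof -
  have "(\<lambda>t. cnj (cinner h (\<phi> t))) \<in> borel_measurable M"
    by (rule borel_measurable_continuous_on[OF _ meas]) (rule linear_continuous_on[OF bounded_linear_cnj])
  moreover have "(\<lambda>t. cnj (cinner h (\<phi> t))) = (\<lambda>t. cinner (\<phi> t) h)"
    by (rule ext) (metis cinner_commute)
  ultimately show ?thesis by simp
qed

lemma sqint': "integrable M (\<lambda>t. (cmod (cinner (\<phi> t) h))\<^sup>2)"
proof -
  have "(\<lambda>t. (cmod (cinner (\<phi> t) h))\<^sup>2) = (\<lambda>t. (cmod (cinner h (\<phi> t)))\<^sup>2)"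
    by (rule ext) (metis cinner_commute complex_mod_cnj)
  thus ?thesis using sqint by simp
qed

lemma sqbd': "(\<integral>t. (cmod (cinner (\<phi> t) h))\<^sup>2 \<partial>M) \<le> B * (norm h)\<^sup>2"
proof -
  have "(\<lambda>t. (cmod (cinner (\<phi> t) h))\<^sup>2) = (\<lambda>t. (cmod (cinner h (\<phi> t)))\<^sup>2)"
    by (rule ext) (metis cinner_commute complex_mod_cnj)
  thus ?thesis using sqbd by simp
qed

lemma sqrt_bd: "sqrt (\<integral>t. (cmod (cinner f (\<phi> t)))\<^sup>2 \<partial>M) \<le> sqrt B * norm f"
proof -
  have "sqrt (\<integral>t. (cmod (cinner f (\<phi> t)))\<^sup>2 \<partial>M) \<le> sqrt (B * (norm f)\<^sup>2)"
    using sqbd by (rule real_sqrt_le_mono)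
  also have "\<dots> = sqrt B * norm f" by (simp add: real_sqrt_mult)
  finally show ?thesis .
qed

lemma sqrt_bd': "sqrt (\<integral>t. (cmod (cinner (\<phi> t) h))\<^sup>2 \<partial>M) \<le> sqrt B * norm h"
proof -
  have "sqrt (\<integral>t. (cmod (cinner (\<phi> t) h))\<^sup>2 \<partial>M) \<le> sqrt (B * (norm h)\<^sup>2)"
    using sqbd' by (rule real_sqrt_le_mono)
  also have "\<dots> = sqrt B * norm h" by (simp add: real_sqrt_mult)
  finally show ?thesis .
qed

lemma prod_int: "integrable M (\<lambda>t. cmod (cinner f (\<phi> t)) * cmod (cinner (\<phi> t) h))"
  by (rule cs_integral(1)) (auto intro: sqint sqint')

lemma prod_bd: "(\<integral>t. cmod (cinner f (\<phi> t)) * cmod (cinner (\<phi> t) h) \<partial>M) \<le> B * norm f * norm h"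
proof -
  have "(\<integral>t. cmod (cinner f (\<phi> t)) * cmod (cinner (\<phi> t) h) \<partial>M)
      = (\<integral>t. \<bar>cmod (cinner f (\<phi> t)) * cmod (cinner (\<phi> t) h)\<bar> \<partial>M)" by simp
  also have "\<dots> \<le> sqrt (\<integral>t. (cmod (cinner f (\<phi> t)))\<^sup>2 \<partial>M) * sqrt (\<integral>t. (cmod (cinner (\<phi> t) h))\<^sup>2 \<partial>M)"
    by (rule cs_integral(2)) (auto intro: sqint sqint')
  also have "\<dots> \<le> (sqrt B * norm f) * (sqrt B * norm h)"
    by (intro mult_mono sqrt_bd sqrt_bd') (auto simp: B0)
  also have "\<dots> = B * norm f * norm h" using B0 by (simp add: algebra_simps)
  finally show ?thesis .
qed

lemma one_int: "integrable M (\<lambda>t. cmod (cinner f (\<phi> t)))"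
proof -
  have "integrable M (\<lambda>t. cmod (cinner f (\<phi> t)) * 1)"
    by (rule cs_integral(1)) (auto intro: sqint)
  thus ?thesis by simp
qed

lemma one_int': "integrable M (\<lambda>t. cmod (cinner (\<phi> t) h))"
proof -
  have "integrable M (\<lambda>t. cmod (cinner (\<phi> t) h) * 1)"
    by (rule cs_integral(1)) (auto intro: sqint')
  thus ?thesis by simp
qed

lemma one_bd: "(\<integral>t. cmod (cinner f (\<phi> t)) \<partial>M) \<le> sqrt (measure M (space M)) * sqrt B * norm f"
proof -
  have "(\<integral>t. cmod (cinner f (\<phi> t)) \<partial>M) = (\<integral>t. \<bar>cmod (cinner f (\<phi> t)) * 1\<bar> \<partial>M)" by simp
  also have "\<dots> \<le> sqrt (\<integral>t. (cmod (cinner f (\<phi> t)))\<^sup>2 \<partial>M) * sqrt (\<integral>t. (1::real)\<^sup>2 \<partial>M)"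
    by (rule cs_integral(2)) (auto intro: sqint)
  also have "\<dots> \<le> (sqrt B * norm f) * sqrt (measure M (space M))"
    by (intro mult_mono sqrt_bd) (auto simp: B0)
  finally show ?thesis by (simp add: ac_simps)
qed

lemma one_bd': "(\<integral>t. cmod (cinner (\<phi> t) h) \<partial>M) \<le> sqrt (measure M (space M)) * sqrt B * norm h"
proof -
  have "(\<integral>t. cmod (cinner (\<phi> t) h) \<partial>M) = (\<integral>t. \<bar>cmod (cinner (\<phi> t) h) * 1\<bar> \<partial>M)" by simp
  also have "\<dots> \<le> sqrt (\<integral>t. (cmod (cinner (\<phi> t) h))\<^sup>2 \<partial>M) * sqrt (\<integral>t. (1::real)\<^sup>2 \<partial>M)"
    by (rule cs_integral(2)) (auto intro: sqint')
  also have "\<dots> \<le> (sqrt B * norm h) * sqrt (measure M (space M))"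
    by (intro mult_mono sqrt_bd') (auto simp: B0)
  finally show ?thesis by (simp add: ac_simps)
qed

lemma w_int:
  assumes wm[measurable]: "w \<in> borel_measurable M" and w1: "\<And>t. t \<in> space M \<Longrightarrow> \<bar>w t\<bar> \<le> 1"
  shows "integrable M (\<lambda>t. complex_of_real (w t) * cinner f (\<phi> t) * cinner (\<phi> t) h)"
proof (rule Bochner_Integration.integrable_bound[OF prod_int[of f h]])
  show "(\<lambda>t. complex_of_real (w t) * cinner f (\<phi> t) * cinner (\<phi> t) h) \<in> borel_measurable M" by measurable
  show "AE t in M. norm (complex_of_real (w t) * cinner f (\<phi> t) * cinner (\<phi> t) h)
      \<le> norm (cmod (cinner f (\<phi> t)) * cmod (cinner (\<phi> t) h))"
  proof (rule AE_I2)
    fix t assume t: "t \<in> space M"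
    have "norm (complex_of_real (w t) * cinner f (\<phi> t) * cinner (\<phi> t) h)
        = \<bar>w t\<bar> * (cmod (cinner f (\<phi> t)) * cmod (cinner (\<phi> t) h))" by (simp add: norm_mult)
    also have "\<dots> \<le> 1 * (cmod (cinner f (\<phi> t)) * cmod (cinner (\<phi> t) h))"
      using w1[OF t] by (intro mult_right_mono) auto
    finally show "norm (complex_of_real (w t) * cinner f (\<phi> t) * cinner (\<phi> t) h)
      \<le> norm (cmod (cinner f (\<phi> t)) * cmod (cinner (\<phi> t) h))" by simp
  qed
qed

lemma w_bd:
  assumes wm[measurable]: "w \<in> borel_measurable M" and w1: "\<And>t. t \<in> space M \<Longrightarrow> \<bar>w t\<bar> \<le> 1"
  shows "cmod (\<integral>t. complex_of_real (w t) * cinner f (\<phi> t) * cinner (\<phi> t) h \<partial>M) \<le> B * norm f * norm h"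
proof -
  have "cmod (\<integral>t. complex_of_real (w t) * cinner f (\<phi> t) * cinner (\<phi> t) h \<partial>M)
      \<le> (\<integral>t. cmod (complex_of_real (w t) * cinner f (\<phi> t) * cinner (\<phi> t) h) \<partial>M)"
    by (rule integral_norm_bound)
  also have "\<dots> \<le> (\<integral>t. cmod (cinner f (\<phi> t)) * cmod (cinner (\<phi> t) h) \<partial>M)"
  proof (rule integral_mono)
    show "integrable M (\<lambda>t. cmod (complex_of_real (w t) * cinner f (\<phi> t) * cinner (\<phi> t) h))"
      using w_int[OF wm w1] by simp
    show "integrable M (\<lambda>t. cmod (cinner f (\<phi> t)) * cmod (cinner (\<phi> t) h))" by (rule prod_int)
    fix t assume t: "t \<in> space M"
    have "cmod (complex_of_real (w t) * cinner f (\<phi> t) * cinner (\<phi> t) h)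
        = \<bar>w t\<bar> * (cmod (cinner f (\<phi> t)) * cmod (cinner (\<phi> t) h))" by (simp add: norm_mult)
    also have "\<dots> \<le> 1 * (cmod (cinner f (\<phi> t)) * cmod (cinner (\<phi> t) h))"
      using w1[OF t] by (intro mult_right_mono) auto
    finally show "cmod (complex_of_real (w t) * cinner f (\<phi> t) * cinner (\<phi> t) h)
        \<le> cmod (cinner f (\<phi> t)) * cmod (cinner (\<phi> t) h)" by simp
  qed
  also have "\<dots> \<le> B * norm f * norm h" by (rule prod_bd)
  finally show ?thesis .
qed

lemma rep:
  assumes wm[measurable]: "w \<in> borel_measurable M" and w1: "\<And>t. t \<in> space M \<Longrightarrow> \<bar>w t\<bar> \<le> 1"
  shows "\<exists>g. \<forall>h. cinner g h = (\<integral>t. complex_of_real (w t) * cinner f (\<phi> t) * cinner (\<phi> t) h \<partial>M)"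
proof (rule riesz_conj)
  fix x y
  have "(\<integral>t. complex_of_real (w t) * cinner f (\<phi> t) * cinner (\<phi> t) (x + y) \<partial>M)
      = (\<integral>t. complex_of_real (w t) * cinner f (\<phi> t) * cinner (\<phi> t) x
             + complex_of_real (w t) * cinner f (\<phi> t) * cinner (\<phi> t) y \<partial>M)"
    by (simp add: cinner_add_right distrib_left)
  also have "\<dots> = (\<integral>t. complex_of_real (w t) * cinner f (\<phi> t) * cinner (\<phi> t) x \<partial>M)
      + (\<integral>t. complex_of_real (w t) * cinner f (\<phi> t) * cinner (\<phi> t) y \<partial>M)"
    by (rule Bochner_Integration.integral_add; rule w_int; use wm w1 in auto)
  finally show "(\<integral>t. complex_of_real (w t) * cinner f (\<phi> t) * cinner (\<phi> t) (x + y) \<partial>M)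
      = (\<integral>t. complex_of_real (w t) * cinner f (\<phi> t) * cinner (\<phi> t) x \<partial>M)
      + (\<integral>t. complex_of_real (w t) * cinner f (\<phi> t) * cinner (\<phi> t) y \<partial>M)" .
next
  fix a x
  have "(\<integral>t. complex_of_real (w t) * cinner f (\<phi> t) * cinner (\<phi> t) (a *\<^sub>C x) \<partial>M)
      = (\<integral>t. cnj a * (complex_of_real (w t) * cinner f (\<phi> t) * cinner (\<phi> t) x) \<partial>M)"
    by (simp add: cinner_scaleC_right ac_simps)
  also have "\<dots> = cnj a * (\<integral>t. complex_of_real (w t) * cinner f (\<phi> t) * cinner (\<phi> t) x \<partial>M)"
    by (rule Bochner_Integration.integral_mult_right; rule w_int; use wm w1 in auto)
  finally show "(\<integral>t. complex_of_real (w t) * cinner f (\<phi> t) * cinner (\<phi> t) (a *\<^sub>C x) \<partial>M)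
      = cnj a * (\<integral>t. complex_of_real (w t) * cinner f (\<phi> t) * cinner (\<phi> t) x \<partial>M)" .
next
  fix x
  show "cmod (\<integral>t. complex_of_real (w t) * cinner f (\<phi> t) * cinner (\<phi> t) x \<partial>M) \<le> (B * norm f) * norm x"
    using w_bd[OF wm w1] by simp
qed

lemma wop:
  assumes wm[measurable]: "\<tau> \<in> borel_measurable M" and w1: "\<And>t. t \<in> space M \<Longrightarrow> \<bar>\<tau> t\<bar> \<le> 1"
  shows "cinner (weighted_frame_op M \<phi> \<tau> f) h =
     (\<integral>t. complex_of_real (\<tau> t) * cinner f (\<phi> t) * cinner (\<phi> t) h \<partial>M)"
proof -
  let ?P = "\<lambda>g. \<forall>h. cinner g h = (\<integral>t. complex_of_real (\<tau> t) * cinner f (\<phi> t) * cinner (\<phi> t) h \<partial>M)"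
  have "\<exists>!g. ?P g"
  proof -
    obtain g where g: "?P g" using rep[OF wm w1] by blast
    moreover have "g' = g" if "?P g'" for g' using g that by (intro cinner_ext) simp
    ultimately show ?thesis by blast
  qed
  hence "?P (THE g. ?P g)" by (rule theI')
  thus ?thesis unfolding weighted_frame_op_def by blast
qed

lemma pop:
  assumes E: "E \<in> sets M"
  shows "cinner (partial_frame_op M \<phi> E f) h =
     (\<integral>t. complex_of_real (indicator E t) * cinner f (\<phi> t) * cinner (\<phi> t) h \<partial>M)"
proof -
  have eq: "(\<integral>t\<in>E. cinner f (\<phi> t) * cinner (\<phi> t) h \<partial>M)
     = (\<integral>t. complex_of_real (indicator E t) * cinner f (\<phi> t) * cinner (\<phi> t) h \<partial>M)" for h
    unfolding set_lebesgue_integral_def by (simp add: scaleR_conv_of_real mult.assoc)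
  have wm: "indicator E \<in> borel_measurable M" using E by simp
  have w1: "\<bar>indicator E t\<bar> \<le> (1::real)" for t by (simp add: indicator_def)
  let ?P = "\<lambda>g. \<forall>h. cinner g h = (\<integral>t. complex_of_real (indicator E t) * cinner f (\<phi> t) * cinner (\<phi> t) h \<partial>M)"
  have "\<exists>!g. ?P g"
  proof -
    obtain g where g: "?P g" using rep[OF wm w1] by blast
    moreover have "g' = g" if "?P g'" for g' using g that by (intro cinner_ext) simp
    ultimately show ?thesis by blast
  qed
  hence "?P (THE g. ?P g)" by (rule theI')
  thus ?thesis unfolding partial_frame_op_def eq by blast
qed

end

lemma dense_seq:
  assumes "separable_space (euclidean :: 'v::real_normed_vector topology)"
  shows "\<exists>d :: nat \<Rightarrow> 'v. \<forall>x e. e > 0 \<longrightarrow> (\<exists>k. norm (x - d k) < e)"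
proof -
  obtain C :: "'v set" where C: "countable C" "closure C = UNIV"
    using assms unfolding separable_space_def by auto
  have Cne: "C \<noteq> {}" using C(2) by auto
  define d where "d = from_nat_into C"
  have rd: "range d = C" unfolding d_def using range_from_nat_into[OF Cne C(1)] .
  have "\<exists>k. norm (x - d k) < e" if e: "e > 0" for x e
  proof -
    have "x \<in> closure C" using C(2) by simp
    then obtain y where "y \<in> C" "dist y x < e" using e closure_approachable by blast
    then obtain k where "y = d k" using rd by blast
    thus ?thesis using \<open>dist y x < e\<close> by (metis dist_norm norm_minus_commute)
  qed
  thus ?thesis by blast
qed

lemma normsq_le_iff:
  fixes w :: "'a::complex_inner"
  assumes d: "\<And>x e. e > 0 \<Longrightarrow> \<exists>k. norm (x - d k) < e"
  shows "(norm w)\<^sup>2 \<le> s \<longleftrightarrow> (\<forall>k. 2 * Re (cinner w (d k)) - (norm (d k))\<^sup>2 \<le> s)"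
proof
  have le: "2 * Re (cinner w (d k)) - (norm (d k))\<^sup>2 \<le> (norm w)\<^sup>2" for k
    using norm_diff_sq[of w "d k"] by (metis diff_ge_0_iff_ge le_diff_eq zero_le_power2 add.commute diff_diff_eq2 diff_le_eq)
  show "(norm w)\<^sup>2 \<le> s \<Longrightarrow> \<forall>k. 2 * Re (cinner w (d k)) - (norm (d k))\<^sup>2 \<le> s"
    using le order_trans by blast
  assume all: "\<forall>k. 2 * Re (cinner w (d k)) - (norm (d k))\<^sup>2 \<le> s"
  show "(norm w)\<^sup>2 \<le> s"
  proof (rule ccontr)
    assume "\<not> (norm w)\<^sup>2 \<le> s"
    hence gt: "(norm w)\<^sup>2 - s > 0" by simp
    obtain k where k: "norm (w - d k) < sqrt ((norm w)\<^sup>2 - s)" using d[of "sqrt ((norm w)\<^sup>2 - s)"] gt by auto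
    have "(norm (w - d k))\<^sup>2 < (norm w)\<^sup>2 - s"
      using k gt by (metis norm_ge_zero power_strict_mono real_sqrt_pow2 less_le zero_less_numeral)
    hence "s < 2 * Re (cinner w (d k)) - (norm (d k))\<^sup>2" using norm_diff_sq[of w "d k"] by simp
    thus False using all by (meson not_le)
  qed
qed

context bsetup begin

lemma normsq_meas:
  fixes d :: "nat \<Rightarrow> 'a"
  assumes d: "\<And>x e. e > 0 \<Longrightarrow> \<exists>k. norm (x - d k) < e"
  shows "(\<lambda>t. (norm (\<phi> t - v))\<^sup>2) \<in> borel_measurable M"
  unfolding borel_measurable_iff_le
proof
  fix s
  have eq: "{t \<in> space M. (norm (\<phi> t - v))\<^sup>2 \<le> s}
     = {t \<in> space M. \<forall>k. 2 * (Re (cinner (\<phi> t) (d k)) - Re (cinner v (d k))) - (norm (d k))\<^sup>2 \<le> s}"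
    by (auto simp: normsq_le_iff[OF d] cinner_diff_left)
  have [measurable]: "(\<lambda>t. Re (cinner (\<phi> t) (d k))) \<in> borel_measurable M" for k
    using meas'[of "d k"] by measurable
  show "{t \<in> space M. (norm (\<phi> t - v))\<^sup>2 \<le> s} \<in> sets M" unfolding eq by measurable
qed

lemma norm_meas:
  fixes d :: "nat \<Rightarrow> 'a"
  assumes d: "\<And>x e. e > 0 \<Longrightarrow> \<exists>k. norm (x - d k) < e"
  shows "(\<lambda>t. norm (\<phi> t - v)) \<in> borel_measurable M"
proof -
  have "(\<lambda>t. sqrt ((norm (\<phi> t - v))\<^sup>2)) \<in> borel_measurable M"
    using normsq_meas[OF d, of v] by measurable
  thus ?thesis by simp
qed

lemma partition_exists:
  fixes d :: "nat \<Rightarrow> 'a" and r :: real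
  assumes d: "\<And>x e. e > 0 \<Longrightarrow> \<exists>k. norm (x - d k) < e" and r: "r > 0"
  shows "\<exists>k A. (\<forall>j. A j \<in> sets M) \<and> disjoint_family A \<and> (\<Union>j. A j) = space M
     \<and> (\<forall>j t. t \<in> A j \<longleftrightarrow> t \<in> space M \<and> k t = j) \<and> (\<forall>t. norm (\<phi> t - d (k t)) < r)
     \<and> k \<in> measurable M (count_space UNIV)"
proof -
  define P where "P t j \<longleftrightarrow> norm (\<phi> t - d j) < r" for t j
  define k where "k t = (LEAST j. P t j)" for t
  have ex: "\<exists>j. P t j" for t unfolding P_def using d[OF r] by blast
  have kP: "P t (k t)" for t unfolding k_def using LeastI_ex[OF ex] .
  have kiff: "k t = j \<longleftrightarrow> P t j \<and> (\<forall>i<j. \<not> P t i)" for t j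
  proof
    assume "k t = j" thus "P t j \<and> (\<forall>i<j. \<not> P t i)" using kP not_less_Least unfolding k_def by blast
  next
    assume h: "P t j \<and> (\<forall>i<j. \<not> P t i)"
    show "k t = j" unfolding k_def
      by (rule Least_equality) (use h not_less in auto)
  qed
  define A where "A j = {t \<in> space M. k t = j}" for j
  have [measurable]: "(\<lambda>t. norm (\<phi> t - d j)) \<in> borel_measurable M" for j by (rule norm_meas[OF d])
  have Aeq: "A j = {t \<in> space M. norm (\<phi> t - d j) < r \<and> (\<forall>i<j. \<not> norm (\<phi> t - d i) < r)}" for j
    unfolding A_def kiff P_def by simp
  have As: "A j \<in> sets M" for j unfolding Aeq by measurable
  have disj: "disjoint_family A" unfolding disjoint_family_on_def A_def by auto
  have un: "(\<Union>j. A j) = space M" unfolding A_def by auto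
  have km: "k \<in> measurable M (count_space UNIV)"
    unfolding measurable_count_space_eq2_countable
  proof (intro conjI ballI)
    show "k \<in> space M \<rightarrow> UNIV" by simp
    fix a :: nat
    have "k -` {a} \<inter> space M = A a" unfolding A_def by auto
    thus "k -` {a} \<inter> space M \<in> sets M" using As by simp
  qed
  show ?thesis
    by (intro exI[of _ k] exI[of _ A] conjI allI As disj un km)
       (use kP in \<open>auto simp: A_def P_def\<close>)
qed

lemma E_exists:
  fixes A :: "nat \<Rightarrow> 'b set" and \<tau> :: "'b \<Rightarrow> real"
  assumes na: "nonatomic M"
    and As: "\<And>j. A j \<in> sets M" and disj: "disjoint_family A" and un: "(\<Union>j. A j) = space M"
    and \<tau>m[measurable]: "\<tau> \<in> borel_measurable M" and \<tau>01: "\<And>t. t \<in> space M \<Longrightarrow> 0 \<le> \<tau> t \<and> \<tau> t \<le> 1"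
  shows "\<exists>E\<in>sets M. measure M E = (\<integral>t. \<tau> t \<partial>M)
     \<and> (\<forall>j. (\<integral>t. indicator (A j) t * (indicator E t - \<tau> t) \<partial>M) = 0)"
proof -
  have Aint: "integrable M (\<lambda>t. indicator (A j) t * \<tau> t)" for j
    by (rule integrable_const_bound[where B=1]) (use \<tau>01 As in \<open>auto simp: indicator_def\<close>)
  have \<tau>int: "integrable M \<tau>"
    by (rule integrable_const_bound[where B=1]) (use \<tau>01 in auto)
  define c where "c j = (\<integral>t. indicator (A j) t * \<tau> t \<partial>M)" for j
  have c0: "0 \<le> c j" for j unfolding c_def
    by (rule integral_nonneg_AE) (use \<tau>01 in \<open>auto simp: indicator_def\<close>)
  have c1: "c j \<le> measure M (A j)" for j
  proof -
    have ii: "integrable M (\<lambda>t. indicator (A j) t :: real)"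
      using As[of j] by (intro integrable_const_bound[where B=1]) auto
    have "c j \<le> (\<integral>t. indicator (A j) t \<partial>M)" unfolding c_def
      by (rule integral_mono[OF Aint ii]) (use \<tau>01 As in \<open>auto simp: indicator_def\<close>)
    also have "\<dots> = measure M (A j)" using As[of j] by (simp add: Int_absorb2 sets.sets_into_space)
    finally show ?thesis .
  qed
  have "\<forall>j. \<exists>B. B \<in> sets M \<and> B \<subseteq> A j \<and> measure M B = c j"
  proof
    fix j show "\<exists>B. B \<in> sets M \<and> B \<subseteq> A j \<and> measure M B = c j"
      using nonatomic_exact[OF na As[of j] c0[of j] c1[of j]] by blast
  qed
  hence "\<exists>E. \<forall>j. E j \<in> sets M \<and> E j \<subseteq> A j \<and> measure M (E j) = c j" by (rule choice)
  then obtain E where E0: "\<forall>j. E j \<in> sets M \<and> E j \<subseteq> A j \<and> measure M (E j) = c j" by blast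
  have E: "\<And>j. E j \<in> sets M" "\<And>j. E j \<subseteq> A j" "\<And>j. measure M (E j) = c j" using E0 by auto
  define EE where "EE = (\<Union>j. E j)"
  have EEs: "EE \<in> sets M" unfolding EE_def using E(1) by auto
  have Adisj: "A i \<inter> A j = {}" if "i \<noteq> j" for i j
    using disj that by (simp add: disjoint_family_on_def)
  have Edisj: "disjoint_family E" unfolding disjoint_family_on_def
  proof (intro ballI impI)
    fix i j :: nat assume "i \<noteq> j"
    thus "E i \<inter> E j = {}" using Adisj[of i j] E(2)[of i] E(2)[of j] by blast
  qed
  have s1: "(\<lambda>j. c j) sums measure M EE"
    using finite_measure_UNION[of E] E(1) Edisj unfolding EE_def by (auto simp: E(3))
  have "(\<integral>t. \<tau> t \<partial>M) = (LINT t:(\<Union>j. A j)|M. \<tau> t)" using set_integral_space[OF \<tau>int] un by simp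
  also have "\<dots> = (\<Sum>j. (LINT t:A j|M. \<tau> t))"
  proof (rule lebesgue_integral_countable_add[OF As])
    show "\<And>i j. i \<noteq> j \<Longrightarrow> A i \<inter> A j = {}" using disj unfolding disjoint_family_on_def by auto
    show "set_integrable M (\<Union>i. A i) \<tau>" unfolding set_integrable_def un
      by (rule integrable_const_bound[where B=1]) (use \<tau>01 in \<open>auto simp: indicator_def\<close>)
  qed
  also have "\<dots> = (\<Sum>j. c j)" unfolding c_def set_lebesgue_integral_def by simp
  also have "\<dots> = measure M EE" using s1 by (rule sums_unique[symmetric])
  finally have mEE: "measure M EE = (\<integral>t. \<tau> t \<partial>M)" by simp
  have zero: "(\<integral>t. indicator (A j) t * (indicator EE t - \<tau> t) \<partial>M) = 0" for j
  proof -
    have ind: "indicator (A j) t * indicator EE t = (indicator (E j) t :: real)" for t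
    proof -
      have "t \<in> A j \<and> t \<in> EE \<longleftrightarrow> t \<in> E j"
      proof
        assume h: "t \<in> A j \<and> t \<in> EE"
        then obtain i where i: "t \<in> E i" unfolding EE_def by blast
        hence "t \<in> A i" using E(2) by blast
        hence "i = j" using h Adisj[of i j] by blast
        thus "t \<in> E j" using i by simp
      next
        assume "t \<in> E j" thus "t \<in> A j \<and> t \<in> EE" using E(2)[of j] unfolding EE_def by blast
      qed
      thus ?thesis by (auto simp: indicator_def)
    qed
    have "(\<integral>t. indicator (A j) t * (indicator EE t - \<tau> t) \<partial>M)
        = (\<integral>t. indicator (E j) t - indicator (A j) t * \<tau> t \<partial>M)"
      by (rule Bochner_Integration.integral_cong) (auto simp: right_diff_distrib ind)
    also have "\<dots> = (\<integral>t. indicator (E j) t \<partial>M) - c j" unfolding c_def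
    proof (rule Bochner_Integration.integral_diff[OF _ Aint])
      show "integrable M (indicator (E j) :: 'b \<Rightarrow> real)"
        using E(1)[of j] by (intro integrable_const_bound[where B=1]) auto
    qed
    also have "\<dots> = 0" using E(1,3)[of j] by (simp add: Int_absorb2 sets.sets_into_space)
    finally show ?thesis .
  qed
  show ?thesis using EEs mEE zero by blast
qed

end

lemma part_zero:
  fixes g :: "'b \<Rightarrow> real" and K :: "nat \<Rightarrow> complex" and k :: "'b \<Rightarrow> nat" and A :: "nat \<Rightarrow> 'b set"
  assumes As: "\<And>j. A j \<in> sets M" and disj: "disjoint_family A" and un: "(\<Union>j. A j) = space M"
    and Aiff: "\<And>j t. t \<in> A j \<longleftrightarrow> t \<in> space M \<and> k t = j"
    and g0: "\<And>j. (\<integral>t. indicator (A j) t * g t \<partial>M) = 0"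
    and int: "integrable M (\<lambda>t. complex_of_real (g t) * K (k t))"
  shows "(\<integral>t. complex_of_real (g t) * K (k t) \<partial>M) = 0"
proof -
  have "(\<integral>t. complex_of_real (g t) * K (k t) \<partial>M) = (LINT t:(\<Union>j. A j)|M. complex_of_real (g t) * K (k t))"
    using set_integral_space[OF int] un by simp
  also have "\<dots> = (\<Sum>j. (LINT t:A j|M. complex_of_real (g t) * K (k t)))"
  proof (rule lebesgue_integral_countable_add[OF As])
    show "\<And>i j. i \<noteq> j \<Longrightarrow> A i \<inter> A j = {}" using disj unfolding disjoint_family_on_def by auto
    show "set_integrable M (\<Union>i. A i) (\<lambda>t. complex_of_real (g t) * K (k t))"
      unfolding set_integrable_def un by (rule integrable_mult_indicator[OF _ int]) simp
  qed
  also have "\<dots> = (\<Sum>j. (0::complex))"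
  proof (rule arg_cong[where f=suminf], rule ext)
    fix j
    have "(LINT t:A j|M. complex_of_real (g t) * K (k t)) = (LINT t:A j|M. complex_of_real (g t) * K j)"
      by (rule set_lebesgue_integral_cong[OF As]) (simp add: Aiff)
    also have "\<dots> = (\<integral>t. complex_of_real (indicator (A j) t * g t) * K j \<partial>M)"
      unfolding set_lebesgue_integral_def by (simp add: scaleR_conv_of_real mult.assoc)
    also have "\<dots> = complex_of_real (\<integral>t. indicator (A j) t * g t \<partial>M) * K j"
      by (simp only: integral_mult_left_zero integral_complex_of_real)
    also have "\<dots> = 0" by (simp add: g0)
    finally show "(LINT t:A j|M. complex_of_real (g t) * K (k t)) = 0" .
  qed
  finally show ?thesis by simp
qed

context bsetup begin

lemma est:
  fixes d :: "nat \<Rightarrow> 'a" and k :: "'b \<Rightarrow> nat" and A :: "nat \<Rightarrow> 'b set" and E :: "'b set"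
    and \<tau> :: "'b \<Rightarrow> real" and r :: real
  assumes As: "\<And>j. A j \<in> sets M" and disj: "disjoint_family A" and un: "(\<Union>j. A j) = space M"
    and Aiff: "\<And>j t. t \<in> A j \<longleftrightarrow> t \<in> space M \<and> k t = j"
    and kd: "\<And>t. norm (\<phi> t - d (k t)) < r"
    and km: "k \<in> measurable M (count_space UNIV)"
    and E: "E \<in> sets M" and \<tau>m[measurable]: "\<tau> \<in> borel_measurable M"
    and \<tau>01: "\<And>t. t \<in> space M \<Longrightarrow> 0 \<le> \<tau> t \<and> \<tau> t \<le> 1"
    and zero: "\<And>j. (\<integral>t. indicator (A j) t * (indicator E t - \<tau> t) \<partial>M) = 0"
    and r: "0 \<le> r"
  shows "cmod (\<integral>t. complex_of_real (indicator E t - \<tau> t) * cinner f (\<phi> t) * cinner (\<phi> t) h \<partial>M)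
     \<le> (2 * r * sqrt (measure M (space M)) * sqrt B + r\<^sup>2 * measure M (space M)) * norm f * norm h"
proof -
  define g where "g t = indicator E t - \<tau> t" for t
  have gm[measurable]: "g \<in> borel_measurable M" unfolding g_def using E by measurable
  have gb: "\<bar>g t\<bar> \<le> 1" if "t \<in> space M" for t
    using \<tau>01[OF that] unfolding g_def by (auto simp: indicator_def)
  define a where "a t = cinner f (\<phi> t)" for t
  define b' where "b' t = cinner (\<phi> t) h" for t
  define b where "b t = cinner f (d (k t))" for t
  define c where "c t = cinner (d (k t)) h" for t
  have bm[measurable]: "b \<in> borel_measurable M" unfolding b_def
    by (rule measurable_compose_countable'[where f="\<lambda>i t. cinner f (d i)" and I=UNIV]) (auto intro: km)
  have cm[measurable]: "c \<in> borel_measurable M" unfolding c_def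
    by (rule measurable_compose_countable'[where f="\<lambda>i t. cinner (d i) h" and I=UNIV]) (auto intro: km)
  have am[measurable]: "a \<in> borel_measurable M" unfolding a_def by measurable
  have b'm[measurable]: "b' \<in> borel_measurable M" unfolding b'_def by measurable
  have ab: "cmod (a t - b t) \<le> norm f * r" for t
  proof -
    have "cmod (a t - b t) = cmod (cinner f (\<phi> t - d (k t)))" unfolding a_def b_def by (simp add: cinner_diff_right)
    also have "\<dots> \<le> norm f * norm (\<phi> t - d (k t))" by (rule cmod_cinner_le)
    also have "\<dots> \<le> norm f * r" using kd[of t] by (intro mult_left_mono) auto
    finally show ?thesis .
  qed
  have bc: "cmod (b' t - c t) \<le> r * norm h" for t
  proof -
    have "cmod (b' t - c t) = cmod (cinner (\<phi> t - d (k t)) h)" unfolding b'_def c_def by (simp add: cinner_diff_left)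
    also have "\<dots> \<le> norm (\<phi> t - d (k t)) * norm h" by (rule cmod_cinner_le)
    also have "\<dots> \<le> r * norm h" using kd[of t] by (intro mult_right_mono) auto
    finally show ?thesis .
  qed
  have bb: "cmod (b t) \<le> cmod (a t) + norm f * r" for t
    using ab[of t] norm_triangle_ineq2[of "b t" "a t"] norm_minus_commute[of "a t" "b t"] by linarith
  have cc: "cmod (c t) \<le> cmod (b' t) + r * norm h" for t
    using bc[of t] norm_triangle_ineq2[of "c t" "b' t"] norm_minus_commute[of "b' t" "c t"] by linarith
  define F where "F t = complex_of_real (g t) * a t * b' t" for t
  define T2 where "T2 t = complex_of_real (g t) * b t * c t" for t
  have Fint: "integrable M F" unfolding F_def a_def b'_def by (rule w_int[OF gm gb])
  define bnd2 where "bnd2 t = cmod (a t) * cmod (b' t) + (r * norm h) * cmod (a t)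
      + (norm f * r) * cmod (b' t) + (norm f * r) * (r * norm h)" for t
  have bnd2int: "integrable M bnd2" unfolding bnd2_def a_def b'_def
    using prod_int[of f h] one_int[of f] one_int'[of h] by simp
  have T2int: "integrable M T2"
  proof (rule Bochner_Integration.integrable_bound[OF bnd2int])
    show "T2 \<in> borel_measurable M" unfolding T2_def by measurable
    show "AE t in M. norm (T2 t) \<le> norm (bnd2 t)"
    proof (rule AE_I2)
      fix t assume t: "t \<in> space M"
      have "norm (T2 t) = \<bar>g t\<bar> * (cmod (b t) * cmod (c t))" unfolding T2_def by (simp add: norm_mult)
      also have "\<dots> \<le> 1 * ((cmod (a t) + norm f * r) * (cmod (b' t) + r * norm h))"
        using gb[OF t] bb[of t] cc[of t] r by (intro mult_mono) auto
      also have "\<dots> = bnd2 t" unfolding bnd2_def by (simp add: algebra_simps)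
      also have "\<dots> \<le> norm (bnd2 t)" by simp
      finally show "norm (T2 t) \<le> norm (bnd2 t)" .
    qed
  qed
  have T2zero: "(\<integral>t. T2 t \<partial>M) = 0"
  proof -
    have eqT: "T2 = (\<lambda>t. complex_of_real (g t) * (\<lambda>j. cinner f (d j) * cinner (d j) h) (k t))"
      unfolding T2_def b_def c_def by (simp add: mult.assoc)
    show ?thesis unfolding eqT
      by (rule part_zero[OF As disj un Aiff]) (use zero T2int eqT g_def in simp_all)
  qed
  define bnd where "bnd t = (r * norm f) * cmod (b' t) + (r * norm h) * cmod (a t) + r\<^sup>2 * norm f * norm h" for t
  have bndint: "integrable M bnd" unfolding bnd_def a_def b'_def
    using one_int[of f] one_int'[of h] by simp
  have T1bd: "cmod (F t - T2 t) \<le> bnd t" if t: "t \<in> space M" for t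
  proof -
    have eq: "F t - T2 t = complex_of_real (g t) * ((a t - b t) * b' t + b t * (b' t - c t))"
      unfolding F_def T2_def by (simp add: algebra_simps)
    have "cmod ((a t - b t) * b' t + b t * (b' t - c t)) \<le> cmod (a t - b t) * cmod (b' t) + cmod (b t) * cmod (b' t - c t)"
      by (metis norm_mult norm_triangle_ineq)
    also have "\<dots> \<le> (norm f * r) * cmod (b' t) + (cmod (a t) + norm f * r) * (r * norm h)"
      using ab[of t] bc[of t] bb[of t] r by (intro add_mono mult_mono) auto
    also have "\<dots> = bnd t" unfolding bnd_def by (simp add: algebra_simps power2_eq_square)
    finally have 1: "cmod ((a t - b t) * b' t + b t * (b' t - c t)) \<le> bnd t" .
    have "cmod (F t - T2 t) = \<bar>g t\<bar> * cmod ((a t - b t) * b' t + b t * (b' t - c t))"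
      unfolding eq by (simp add: norm_mult)
    also have "\<dots> \<le> 1 * bnd t" using gb[OF t] 1 by (intro mult_mono) auto
    finally show ?thesis by simp
  qed
  have "(\<integral>t. F t \<partial>M) = (\<integral>t. F t - T2 t \<partial>M) + (\<integral>t. T2 t \<partial>M)"
    using Fint T2int by simp
  hence "(\<integral>t. F t \<partial>M) = (\<integral>t. F t - T2 t \<partial>M)" using T2zero by simp
  hence "cmod (\<integral>t. F t \<partial>M) \<le> (\<integral>t. cmod (F t - T2 t) \<partial>M)"
    using integral_norm_bound by metis
  also have "\<dots> \<le> (\<integral>t. bnd t \<partial>M)"
    by (rule integral_mono) (use Fint T2int bndint T1bd in auto)
  also have "\<dots> = (r * norm f) * (\<integral>t. cmod (cinner (\<phi> t) h) \<partial>M) + (r * norm h) * (\<integral>t. cmod (cinner f (\<phi> t)) \<partial>M)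
      + r\<^sup>2 * norm f * norm h * measure M (space M)"
    unfolding bnd_def a_def b'_def using one_int[of f] one_int'[of h] by simp
  also have "\<dots> \<le> (r * norm f) * (sqrt (measure M (space M)) * sqrt B * norm h)
      + (r * norm h) * (sqrt (measure M (space M)) * sqrt B * norm f)
      + r\<^sup>2 * norm f * norm h * measure M (space M)"
    using r by (intro add_mono mult_left_mono one_bd one_bd') auto
  also have "\<dots> = (2 * r * sqrt (measure M (space M)) * sqrt B + r\<^sup>2 * measure M (space M)) * norm f * norm h"
    by (simp add: algebra_simps)
  finally show ?thesis unfolding F_def g_def a_def b'_def .
qed

end

theorem theorem3p6:
  fixes M :: "'b measure" and \<phi> :: "'b \<Rightarrow> 'a::{complex_inner, complete_space}"
    and \<tau> :: "'b \<Rightarrow> real" and \<epsilon> :: real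
  assumes "finite_measure M"
    and "nonatomic M"
    and "separable_space (euclidean :: 'a topology)"
    and "continuous_bessel_family M \<phi>"
    and "\<tau> \<in> borel_measurable M"
    and "\<forall>t\<in>space M. 0 \<le> \<tau> t \<and> \<tau> t \<le> 1"
    and "\<epsilon> > 0"
  shows "\<exists>E\<in>sets M.
           onorm (\<lambda>f. partial_frame_op M \<phi> E f - weighted_frame_op M \<phi> \<tau> f) \<le> \<epsilon> \<and>
           measure M E \<le> (\<integral> t. \<tau> t \<partial>M)"
proof -
  note fm = assms(1) and na = assms(2) and sep = assms(3) and \<tau>m = assms(5) and eps = assms(7)
  have \<tau>01: "\<And>t. t \<in> space M \<Longrightarrow> 0 \<le> \<tau> t \<and> \<tau> t \<le> 1" using assms(6) by blast
  interpret fm: finite_measure M by (rule fm)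
  obtain B where cb: "continuous_bessel M \<phi> B" using assms(4) unfolding continuous_bessel_family_def by blast
  define B' where "B' = max B 0"
  have meas: "\<And>f. (\<lambda>t. cinner f (\<phi> t)) \<in> borel_measurable M" using cb unfolding continuous_bessel_def by blast
  have nnb: "(\<integral>\<^sup>+ t. ennreal ((cmod (cinner f (\<phi> t)))\<^sup>2) \<partial>M) \<le> ennreal (B' * (norm f)\<^sup>2)" for f
  proof -
    have "(\<integral>\<^sup>+ t. ennreal ((cmod (cinner f (\<phi> t)))\<^sup>2) \<partial>M) \<le> ennreal (B * (norm f)\<^sup>2)"
      using cb unfolding continuous_bessel_def by blast
    also have "\<dots> \<le> ennreal (B' * (norm f)\<^sup>2)"
      unfolding B'_def by (intro ennreal_leI mult_right_mono) auto
    finally show ?thesis .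
  qed
  have sqm: "(\<lambda>t. (cmod (cinner f (\<phi> t)))\<^sup>2) \<in> borel_measurable M" for f using meas[of f] by measurable
  have sqint: "integrable M (\<lambda>t. (cmod (cinner f (\<phi> t)))\<^sup>2)" for f
  proof (rule integrableI_nonneg[OF sqm])
    show "AE x in M. 0 \<le> (cmod (cinner f (\<phi> x)))\<^sup>2" by simp
    show "(\<integral>\<^sup>+ t. ennreal ((cmod (cinner f (\<phi> t)))\<^sup>2) \<partial>M) < \<infinity>"
      using nnb[of f] by (simp add: order_le_less_trans)
  qed
  have sqbd: "(\<integral>t. (cmod (cinner f (\<phi> t)))\<^sup>2 \<partial>M) \<le> B' * (norm f)\<^sup>2" for f
  proof -
    have "ennreal (\<integral>t. (cmod (cinner f (\<phi> t)))\<^sup>2 \<partial>M) = (\<integral>\<^sup>+ t. ennreal ((cmod (cinner f (\<phi> t)))\<^sup>2) \<partial>M)"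
      by (rule nn_integral_eq_integral[symmetric]) (auto intro: sqint)
    hence "ennreal (\<integral>t. (cmod (cinner f (\<phi> t)))\<^sup>2 \<partial>M) \<le> ennreal (B' * (norm f)\<^sup>2)" using nnb[of f] by simp
    moreover have "0 \<le> B' * (norm f)\<^sup>2" unfolding B'_def by simp
    ultimately show ?thesis by (simp add: ennreal_le_iff)
  qed
  interpret bs: bsetup M \<phi> B'
    by (intro bsetup.intro bsetup_axioms.intro fm meas sqint sqbd) (simp add: B'_def)
  obtain d :: "nat \<Rightarrow> 'a" where d: "\<And>x e. e > 0 \<Longrightarrow> \<exists>k. norm (x - d k) < e"
    using dense_seq[OF sep] by blast
  define m where "m = measure M (space M)"
  have m0: "0 \<le> m" unfolding m_def by simp
  define K where "K = 2 * sqrt m * sqrt B' + m + 1"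
  have K0: "K > 0" unfolding K_def using m0 by (simp add: add_nonneg_pos B'_def)
  define r where "r = min 1 (\<epsilon> / K)"
  have r0: "r > 0" unfolding r_def using eps K0 by simp
  have r1: "r \<le> 1" and rK: "r * K \<le> \<epsilon>" unfolding r_def using eps K0 by (auto simp: min_def field_simps)
  define C where "C = 2 * r * sqrt m * sqrt B' + r\<^sup>2 * m"
  have Ceps: "C \<le> \<epsilon>"
  proof -
    have "r\<^sup>2 * m \<le> r * m" using r0 r1 m0 by (intro mult_right_mono) (auto simp: power2_eq_square)
    hence "C \<le> r * (2 * sqrt m * sqrt B' + m)" unfolding C_def by (simp add: algebra_simps)
    also have "\<dots> \<le> r * K" unfolding K_def using r0 by (intro mult_left_mono) auto
    finally show ?thesis using rK by simp
  qed
  have C0: "0 \<le> C" unfolding C_def using r0 m0 by (simp add: B'_def)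
  obtain k A where kA: "\<forall>j. A j \<in> sets M" "disjoint_family A" "(\<Union>j. A j) = space M"
     "\<forall>j t. t \<in> A j \<longleftrightarrow> t \<in> space M \<and> k t = j" "\<forall>t. norm (\<phi> t - d (k t)) < r"
     "k \<in> measurable M (count_space UNIV)"
    using bs.partition_exists[OF d r0] by blast
  obtain E where E: "E \<in> sets M" "measure M E = (\<integral>t. \<tau> t \<partial>M)"
     "\<forall>j. (\<integral>t. indicator (A j) t * (indicator E t - \<tau> t) \<partial>M) = 0"
    using bs.E_exists[OF na _ kA(2,3) \<tau>m \<tau>01] kA(1) by blast
  have est: "cmod (\<integral>t. complex_of_real (indicator E t - \<tau> t) * cinner f (\<phi> t) * cinner (\<phi> t) h \<partial>M)
     \<le> C * norm f * norm h" for f h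
    unfolding C_def m_def
    by (rule bs.est[of A k d r E \<tau>]) (use kA E \<tau>m \<tau>01 r0 in auto)
  have \<tau>1: "\<bar>\<tau> t\<bar> \<le> 1" if "t \<in> space M" for t using \<tau>01[OF that] by simp
  have ind1: "\<bar>indicator E t\<bar> \<le> (1::real)" for t by (simp add: indicator_def)
  have indm: "indicator E \<in> borel_measurable M" using E(1) by simp
  have inner: "cinner (partial_frame_op M \<phi> E f - weighted_frame_op M \<phi> \<tau> f) h
     = (\<integral>t. complex_of_real (indicator E t - \<tau> t) * cinner f (\<phi> t) * cinner (\<phi> t) h \<partial>M)" for f h
  proof -
    have "cinner (partial_frame_op M \<phi> E f - weighted_frame_op M \<phi> \<tau> f) h
        = (\<integral>t. complex_of_real (indicator E t) * cinner f (\<phi> t) * cinner (\<phi> t) h \<partial>M)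
          - (\<integral>t. complex_of_real (\<tau> t) * cinner f (\<phi> t) * cinner (\<phi> t) h \<partial>M)"
      by (simp add: cinner_diff_left bs.pop[OF E(1)] bs.wop[OF \<tau>m \<tau>1])
    also have "\<dots> = (\<integral>t. complex_of_real (indicator E t) * cinner f (\<phi> t) * cinner (\<phi> t) h
          - complex_of_real (\<tau> t) * cinner f (\<phi> t) * cinner (\<phi> t) h \<partial>M)"
      by (rule Bochner_Integration.integral_diff[symmetric]; rule bs.w_int; use indm ind1 \<tau>m \<tau>1 in auto)
    also have "\<dots> = (\<integral>t. complex_of_real (indicator E t - \<tau> t) * cinner f (\<phi> t) * cinner (\<phi> t) h \<partial>M)"
      by (simp add: algebra_simps)
    finally show ?thesis .
  qed
  have onb: "onorm (\<lambda>f. partial_frame_op M \<phi> E f - weighted_frame_op M \<phi> \<tau> f) \<le> \<epsilon>"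
  proof (rule onorm_bound)
    show "0 \<le> \<epsilon>" using eps by simp
    fix f
    define v where "v = partial_frame_op M \<phi> E f - weighted_frame_op M \<phi> \<tau> f"
    have "complex_of_real ((norm v)\<^sup>2) = cinner v v" by (simp add: cinner_self)
    also have "\<dots> = (\<integral>t. complex_of_real (indicator E t - \<tau> t) * cinner f (\<phi> t) * cinner (\<phi> t) v \<partial>M)"
      unfolding v_def by (rule inner)
    finally have "(norm v)\<^sup>2 = cmod (\<integral>t. complex_of_real (indicator E t - \<tau> t) * cinner f (\<phi> t) * cinner (\<phi> t) v \<partial>M)"
      by (metis norm_of_real abs_of_nonneg zero_le_power2)
    also have "\<dots> \<le> C * norm f * norm v" by (rule est)
    finally have vv: "norm v * norm v \<le> (C * norm f) * norm v" by (simp add: power2_eq_square)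
    have "norm v \<le> C * norm f"
    proof (cases "norm v = 0")
      case True thus ?thesis using C0 by simp
    next
      case False hence "norm v > 0" by simp
      thus ?thesis using vv by simp
    qed
    also have "\<dots> \<le> \<epsilon> * norm f" using Ceps by (intro mult_right_mono) auto
    finally show "norm (partial_frame_op M \<phi> E f - weighted_frame_op M \<phi> \<tau> f) \<le> \<epsilon> * norm f"
      unfolding v_def .
  qed
  show ?thesis using onb E(1,2) by auto
qed

end
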